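(* Let $\mathcal{C}$ be a category, $J$ a directed partially ordered set, and let $(f,f^j_\mu):\boldsymbol{X}\to\boldsymbol{Y}$ and $(g,g^j_\nu):\boldsymbol{Y}\to\boldsymbol{Z}=(Z_\nu,r_{\nu\nu'},N)$ be $J$-morphisms of inverse systems in $\mathcal{C}$, where $\boldsymbol{X}=(X_\lambda,p_{\lambda\lambda'},\Lambda)$, $\boldsymbol{Y}=(Y_\mu,q_{\mu\mu'},M)$. Then $(h,h^j_\nu)$ with $h=fg:N\to\Lambda$ and $h^j_\nu=g^j_\nu f^j_{g(\nu)}:X_{fg(\nu)}\to Z_\nu$ ($j\in J$, $\nu\in N$) is a $J$-morphism of $\boldsymbol{X}$ to $\boldsymbol{Z}$.
   Context: An inverse system $\boldsymbol{X}=(X_\lambda,p_{\lambda\lambda'},\Lambda)$ in $\mathcal{C}$: $\Lambda$ directed preordered, morphisms $p_{\lambda\lambda'}:X_{\lambda'}\to X_\lambda$ for $\lambda\le\lambda'$, $p_{\lambda\lambda}=1$, $p_{\lambda\lambda'}p_{\lambda'\lambda''}=p_{\lambda\lambda''}$. A $J$-morphism $(f,f^j_\mu):\boldsymbol{X}\to\boldsymbol{Y}=(Y_\mu,q_{\mu\mu'},M)$ consists of a function $f:M\to\Lambda$ and $\mathcal{C}$-morphisms $f^j_\mu:X_{f(\mu)}\to Y_\mu$ ($\mu\in M$, $j\in J$) such that for all $\mu\le\mu'$ there exist $\lambda\ge f(\mu),f(\mu')$ and $j_0\in J$ with $f^{j'}_\mu p_{f(\mu)\lambda}=q_{\mu\mu'}f^{j'}_{\mu'}p_{f(\mu')\lambda}$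 for all $j'\ge j_0$. *)

theory Defs
  imports Main
begin

text \<open>A (small or large) category given by a set of objects, a set of arrows,
domain, codomain, identities and composition.  Comp g f is "g after f".\<close>

record ('o, 'a) category =
  Obj  :: "'o set"
  Arr  :: "'a set"
  Dom  :: "'a \<Rightarrow> 'o"
  Cod  :: "'a \<Rightarrow> 'o"
  Ide  :: "'o \<Rightarrow> 'a"
  Comp :: "'a \<Rightarrow> 'a \<Rightarrow> 'a"

definition is_category :: "('o, 'a, 'e) category_scheme \<Rightarrow> bool" where
  "is_category C \<longleftrightarrow>
     (\<forall>u \<in> Arr C. Dom C u \<in> Obj C \<and> Cod C u \<in> Obj C) \<and>
     (\<forall>x \<in> Obj C. Ide C x \<in> Arr C \<and> Dom C (Ide C x) = x \<and> Cod C (Ide C x) = x) \<and>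
     (\<forall>u \<in> Arr C. \<forall>v \<in> Arr C. Cod C u = Dom C v \<longrightarrow>
        Comp C v u \<in> Arr C \<and> Dom C (Comp C v u) = Dom C u \<and> Cod C (Comp C v u) = Cod C v) \<and>
     (\<forall>u \<in> Arr C. \<forall>v \<in> Arr C. \<forall>w \<in> Arr C. Cod C u = Dom C v \<longrightarrow> Cod C v = Dom C w \<longrightarrow>
        Comp C w (Comp C v u) = Comp C (Comp C w v) u) \<and>
     (\<forall>u \<in> Arr C. Comp C u (Ide C (Dom C u)) = u \<and> Comp C (Ide C (Cod C u)) u = u)"

definition hom_in :: "('o, 'a, 'e) category_scheme \<Rightarrow> 'a \<Rightarrow> 'o \<Rightarrow> 'o \<Rightarrow> bool" where
  "hom_in C u x y \<longleftrightarrow> u \<in> Arr C \<and> Dom C u = x \<and> Cod C u = y"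

definition directed_preorder :: "'i set \<Rightarrow> ('i \<Rightarrow> 'i \<Rightarrow> bool) \<Rightarrow> bool" where
  "directed_preorder A le \<longleftrightarrow> A \<noteq> {} \<and>
     (\<forall>a \<in> A. le a a) \<and>
     (\<forall>a \<in> A. \<forall>b \<in> A. \<forall>c \<in> A. le a b \<longrightarrow> le b c \<longrightarrow> le a c) \<and>
     (\<forall>a \<in> A. \<forall>b \<in> A. \<exists>c \<in> A. le a c \<and> le b c)"

definition directed_poset :: "'i set \<Rightarrow> ('i \<Rightarrow> 'i \<Rightarrow> bool) \<Rightarrow> bool" where
  "directed_poset A le \<longleftrightarrow> directed_preorder A le \<and>
     (\<forall>a \<in> A. \<forall>b \<in> A. le a b \<longrightarrow> le b a \<longrightarrow> a = b)"

definition inverse_system ::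
  "('o, 'a, 'e) category_scheme \<Rightarrow> 'l set \<Rightarrow> ('l \<Rightarrow> 'l \<Rightarrow> bool) \<Rightarrow> ('l \<Rightarrow> 'o)
     \<Rightarrow> ('l \<Rightarrow> 'l \<Rightarrow> 'a) \<Rightarrow> bool" where
  "inverse_system C L le X p \<longleftrightarrow>
     directed_preorder L le \<and>
     (\<forall>l \<in> L. X l \<in> Obj C) \<and>
     (\<forall>l \<in> L. \<forall>l' \<in> L. le l l' \<longrightarrow> hom_in C (p l l') (X l') (X l)) \<and>
     (\<forall>l \<in> L. p l l = Ide C (X l)) \<and>
     (\<forall>l \<in> L. \<forall>l' \<in> L. \<forall>l'' \<in> L. le l l' \<longrightarrow> le l' l'' \<longrightarrow>
        Comp C (p l l') (p l' l'') = p l l'')"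

definition J_morphism ::
  "('o, 'a, 'e) category_scheme \<Rightarrow> 'j set \<Rightarrow> ('j \<Rightarrow> 'j \<Rightarrow> bool)
     \<Rightarrow> 'l set \<Rightarrow> ('l \<Rightarrow> 'l \<Rightarrow> bool) \<Rightarrow> ('l \<Rightarrow> 'o) \<Rightarrow> ('l \<Rightarrow> 'l \<Rightarrow> 'a)
     \<Rightarrow> 'm set \<Rightarrow> ('m \<Rightarrow> 'm \<Rightarrow> bool) \<Rightarrow> ('m \<Rightarrow> 'o) \<Rightarrow> ('m \<Rightarrow> 'm \<Rightarrow> 'a)
     \<Rightarrow> ('m \<Rightarrow> 'l) \<Rightarrow> ('j \<Rightarrow> 'm \<Rightarrow> 'a) \<Rightarrow> bool" where
  "J_morphism C J leJ L leL X p M leM Y q f fj \<longleftrightarrow>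
     (\<forall>m \<in> M. f m \<in> L) \<and>
     (\<forall>j \<in> J. \<forall>m \<in> M. hom_in C (fj j m) (X (f m)) (Y m)) \<and>
     (\<forall>m \<in> M. \<forall>m' \<in> M. leM m m' \<longrightarrow>
        (\<exists>l \<in> L. leL (f m) l \<and> leL (f m') l \<and>
          (\<exists>j0 \<in> J. \<forall>j' \<in> J. leJ j0 j' \<longrightarrow>
             Comp C (fj j' m) (p (f m) l) = Comp C (q m m') (Comp C (fj j' m') (p (f m') l)))))"

end

theory Submission
  imports Defs
begin

lemma cat_arr: "is_category C \<Longrightarrow> u \<in> Arr C \<Longrightarrow> v \<in> Arr C \<Longrightarrow> Cod C u = Dom C v \<Longrightarrow> Comp C v u \<in> Arr C"
  unfolding is_category_def by blast
lemma cat_dom: "is_category C \<Longrightarrow> u \<in> Arr C \<Longrightarrow> v \<in> Arr C \<Longrightarrow> Cod C u = Dom C v \<Longrightarrow> Dom C (Comp C v u) = Dom C u"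
  unfolding is_category_def by blast
lemma cat_cod: "is_category C \<Longrightarrow> u \<in> Arr C \<Longrightarrow> v \<in> Arr C \<Longrightarrow> Cod C u = Dom C v \<Longrightarrow> Cod C (Comp C v u) = Cod C v"
  unfolding is_category_def by blast
lemma cat_assoc: "is_category C \<Longrightarrow> u \<in> Arr C \<Longrightarrow> v \<in> Arr C \<Longrightarrow> w \<in> Arr C \<Longrightarrow> Cod C u = Dom C v \<Longrightarrow> Cod C v = Dom C w \<Longrightarrow>
   Comp C (Comp C w v) u = Comp C w (Comp C v u)"
  unfolding is_category_def by metis

theorem lemma1:
  fixes C :: "('o, 'a, 'e) category_scheme"
    and J :: "'j set" and leJ :: "'j \<Rightarrow> 'j \<Rightarrow> bool"
    and L :: "'l set" and leL :: "'l \<Rightarrow> 'l \<Rightarrow> bool" and X :: "'l \<Rightarrow> 'o" and p :: "'l \<Rightarrow> 'l \<Rightarrow> 'a"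
    and M :: "'m set" and leM :: "'m \<Rightarrow> 'm \<Rightarrow> bool" and Y :: "'m \<Rightarrow> 'o" and q :: "'m \<Rightarrow> 'm \<Rightarrow> 'a"
    and N :: "'n set" and leN :: "'n \<Rightarrow> 'n \<Rightarrow> bool" and Z :: "'n \<Rightarrow> 'o" and r :: "'n \<Rightarrow> 'n \<Rightarrow> 'a"
    and f :: "'m \<Rightarrow> 'l" and fj :: "'j \<Rightarrow> 'm \<Rightarrow> 'a"
    and g :: "'n \<Rightarrow> 'm" and gj :: "'j \<Rightarrow> 'n \<Rightarrow> 'a"
  assumes "is_category C"
    and "directed_poset J leJ"
    and "inverse_system C L leL X p"
    and "inverse_system C M leM Y q"
    and "inverse_system C N leN Z r"
    and "J_morphism C J leJ L leL X p M leM Y q f fj"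
    and "J_morphism C J leJ M leM Y q N leN Z r g gj"
  shows "J_morphism C J leJ L leL X p N leN Z r (f \<circ> g)
           (\<lambda>j \<nu>. Comp C (gj j \<nu>) (fj j (g \<nu>)))"
proof -
  note cat = assms(1)
  note catr = cat_arr[OF cat] cat_dom[OF cat] cat_cod[OF cat] cat_assoc[OF cat]
  note DJ = assms(2)[unfolded directed_poset_def directed_preorder_def, THEN conjunct1]
  note Jd = DJ[THEN conjunct2, THEN conjunct2, THEN conjunct1] DJ[THEN conjunct2, THEN conjunct2, THEN conjunct2]
  note IL = assms(3)[unfolded inverse_system_def]
  note DL = IL[THEN conjunct1, unfolded directed_preorder_def]
  note Ld = DL[THEN conjunct2, THEN conjunct2, THEN conjunct1] DL[THEN conjunct2, THEN conjunct2, THEN conjunct2]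
  note Lh = IL[THEN conjunct2, THEN conjunct2, THEN conjunct1]
  note Lc = IL[THEN conjunct2, THEN conjunct2, THEN conjunct2, THEN conjunct2]
  note Mh = assms(4)[unfolded inverse_system_def, THEN conjunct2, THEN conjunct2, THEN conjunct1]
  note Nh = assms(5)[unfolded inverse_system_def, THEN conjunct2, THEN conjunct2, THEN conjunct1]
  note JM6 = assms(6)[unfolded J_morphism_def]
  note fM = JM6[THEN conjunct1] and fh = JM6[THEN conjunct2, THEN conjunct1]
    and fc = JM6[THEN conjunct2, THEN conjunct2]
  note JM7 = assms(7)[unfolded J_morphism_def]
  note gM = JM7[THEN conjunct1] and gh = JM7[THEN conjunct2, THEN conjunct1]
    and gc = JM7[THEN conjunct2, THEN conjunct2]
  show ?thesis
    unfolding J_morphism_def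
  proof (intro conjI ballI impI)
    fix n assume "n \<in> N" then show "(f \<circ> g) n \<in> L" using fM gM by auto
  next
    fix j n assume "j \<in> J" "n \<in> N"
    then show "hom_in C (Comp C (gj j n) (fj j (g n))) (X ((f \<circ> g) n)) (Z n)"
      using fh gh gM catr unfolding hom_in_def by auto
  next
    fix n n' assume n: "n \<in> N" "n' \<in> N" "leN n n'"
    define m where "m = g n"
    define m' where "m' = g n'"
    have m: "m \<in> M" "m' \<in> M" using gM n m_def m'_def by auto
    obtain m'' j1 where m'': "m'' \<in> M" "leM m m''" "leM m' m''" "j1 \<in> J"
      and E2: "\<And>j'. j' \<in> J \<Longrightarrow> leJ j1 j' \<Longrightarrow>
             Comp C (gj j' n) (q m m'') = Comp C (r n n') (Comp C (gj j' n') (q m' m''))"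
      using gc n unfolding m_def m'_def by blast
    obtain l1 j2 where l1: "l1 \<in> L" "leL (f m) l1" "leL (f m'') l1" "j2 \<in> J"
      and E1: "\<And>j'. j' \<in> J \<Longrightarrow> leJ j2 j' \<Longrightarrow>
             Comp C (fj j' m) (p (f m) l1) = Comp C (q m m'') (Comp C (fj j' m'') (p (f m'') l1))"
      using fc m m'' by blast
    obtain l2 j3 where l2: "l2 \<in> L" "leL (f m') l2" "leL (f m'') l2" "j3 \<in> J"
      and E3: "\<And>j'. j' \<in> J \<Longrightarrow> leJ j3 j' \<Longrightarrow>
             Comp C (fj j' m') (p (f m') l2) = Comp C (q m' m'') (Comp C (fj j' m'') (p (f m'') l2))"
      using fc m m'' by blast
    obtain l where l: "l \<in> L" "leL l1 l" "leL l2 l" using Ld l1 l2 by blast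
    obtain j12 where j12: "j12 \<in> J" "leJ j1 j12" "leJ j2 j12" using Jd l1 m'' by blast
    obtain j0 where j0: "j0 \<in> J" "leJ j12 j0" "leJ j3 j0" using Jd j12 l2 by blast
    have fm: "f m \<in> L" "f m' \<in> L" "f m'' \<in> L" using fM m m'' by auto
    have lm: "leL (f m) l" "leL (f m') l" "leL (f m'') l" using Ld fm l l1 l2 by meson+
    show "\<exists>la\<in>L. leL ((f \<circ> g) n) la \<and> leL ((f \<circ> g) n') la \<and>
             (\<exists>j0\<in>J. \<forall>j'\<in>J. leJ j0 j' \<longrightarrow>
               Comp C (Comp C (gj j' n) (fj j' (g n))) (p ((f \<circ> g) n) la) =
               Comp C (r n n') (Comp C (Comp C (gj j' n') (fj j' (g n'))) (p ((f \<circ> g) n') la)))"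
    proof (intro bexI conjI ballI impI)
      show "l \<in> L" "leL ((f \<circ> g) n) l" "leL ((f \<circ> g) n') l" "j0 \<in> J"
        using l lm j0 m_def m'_def by auto
      fix j assume j: "j \<in> J" "leJ j0 j"
      have jj: "leJ j1 j" "leJ j2 j" "leJ j3 j" using Jd j j0 j12 l1 l2 m'' by meson+
      have P: "Comp C (p (f m) l1) (p l1 l) = p (f m) l"
              "Comp C (p (f m'') l1) (p l1 l) = p (f m'') l"
              "Comp C (p (f m') l2) (p l2 l) = p (f m') l"
              "Comp C (p (f m'') l2) (p l2 l) = p (f m'') l"
        using Lc fm l l1 l2 by auto
      have H: "hom_in C (p (f m) l1) (X l1) (X (f m))" "hom_in C (p (f m'') l1) (X l1) (X (f m''))"
              "hom_in C (p (f m') l2) (X l2) (X (f m'))" "hom_in C (p (f m'') l2) (X l2) (X (f m''))"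
              "hom_in C (p l1 l) (X l) (X l1)" "hom_in C (p l2 l) (X l) (X l2)"
              "hom_in C (p (f m) l) (X l) (X (f m))" "hom_in C (p (f m') l) (X l) (X (f m'))"
              "hom_in C (p (f m'') l) (X l) (X (f m''))"
              "hom_in C (fj j m) (X (f m)) (Y m)" "hom_in C (fj j m') (X (f m')) (Y m')"
              "hom_in C (fj j m'') (X (f m'')) (Y m'')"
              "hom_in C (q m m'') (Y m'') (Y m)" "hom_in C (q m' m'') (Y m'') (Y m')"
              "hom_in C (gj j n) (Y m) (Z n)" "hom_in C (gj j n') (Y m') (Z n')"
              "hom_in C (r n n') (Z n') (Z n)"
        using fm l l1 l2 lm m m'' n j by (auto intro!: Lh[rule_format] fh[rule_format] gh[rule_format, of _ n, folded m_def] gh[rule_format, of _ n', folded m'_def] Mh[rule_format] Nh[rule_format])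
      note HH = H[unfolded hom_in_def]
      have "Comp C (Comp C (gj j n) (fj j m)) (p (f m) l)
          = Comp C (gj j n) (Comp C (Comp C (fj j m) (p (f m) l1)) (p l1 l))"
        by (simp add: P(1) HH catr)
      also have "\<dots> = Comp C (gj j n) (Comp C (Comp C (q m m'') (Comp C (fj j m'') (p (f m'') l1))) (p l1 l))"
        using E1 j jj by simp
      also have "\<dots> = Comp C (Comp C (gj j n) (q m m'')) (Comp C (fj j m'') (p (f m'') l))"
        by (simp add: P(2) HH catr)
      also have "\<dots> = Comp C (Comp C (r n n') (Comp C (gj j n') (q m' m''))) (Comp C (fj j m'') (p (f m'') l))"
        using E2 j jj by simp
      also have "\<dots> = Comp C (r n n') (Comp C (gj j n') (Comp C (Comp C (q m' m'') (Comp C (fj j m'') (p (f m'') l2))) (p l2 l)))"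
        by (simp add: P(4) HH catr)
      also have "\<dots> = Comp C (r n n') (Comp C (gj j n') (Comp C (Comp C (fj j m') (p (f m') l2)) (p l2 l)))"
        using E3 j jj by simp
      also have "\<dots> = Comp C (r n n') (Comp C (Comp C (gj j n') (fj j m')) (p (f m') l))"
        by (simp add: P(3) HH catr)
      finally show "Comp C (Comp C (gj j n) (fj j (g n))) (p ((f \<circ> g) n) l) =
               Comp C (r n n') (Comp C (Comp C (gj j n') (fj j (g n'))) (p ((f \<circ> g) n') l))"
        unfolding m_def m'_def by simp
    qed
  qed
qed

end
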